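(* Let $u,i,v,j\in\mathbb{Z}_n$ with $\alpha=\dim L(u,i)\leqslant\beta=\dim L(v,j)$. Let $h\in L(u,i)$ and $h'\in L(v,j)$ be nonzero vectors annihilated by $X$ (so $e_ih=h$, $e_jh'=h'$). Then the elements $z_{s,t}=\gamma_i^sh\otimes\gamma_j^th'$ ($0\leqslant s\leqslant\alpha-1$, $0\leqslant t\leqslant\beta-1$) form a basis of $L(u,i)\otimes L(v,j)$. Grading $L(u,i)\otimes L(v,j)$ by $\deg z_{s,t}=s+t$, the kernel of the action of $X$ on $L(u,i)\otimes L(v,j)$ has dimension $\alpha$ and is spanned by elements $x_\theta$, $0\leqslant\theta\leqslant\alpha-1$, with $x_\theta$ homogeneous of degree $\theta$ (one element up to scalars in each such degree).
   Context: $k$ is an algebraically closed field; $n,d$ integers with $d\geqslant2$, $d\mid n$, $\mathrm{char}\,k\nmid n$; $q$ a primitive $d$-th root of unity. $\Lambda_{n,d}$ is the path algebra of the cyclic quiver with vertices $e_i$ and arrows $a_i:e_i\to e_{i+1}$ ($i\in\mathbb{Z}_n$) modulo all paths of length $d$; $\gamma_i^m=a_{i+m-1}\cdots a_i$, $\gamma_i^0=e_i$. $\mathcal{D}(\Lambda_{n,d})$ is the Drinfel'd double of the Hopf algebra $\Lambda_{n,d}$; concretely it is generated by $G,X,e_i,a_i$ with relations $G^n=1$, $X^d=0$, $GX=q^{-1}XG$, products of paths as in $\Lambda_{n,d}$, $\gamma_\ell^mG=q^{-m}G\gamma_\ell^m$, $\gamma_\ell^mX=q^{-m}X\gamma_{\ell+1}^m-q^{-m}(m)_q\gamma_{\ell+1}^{m-1}+q^{\ell+1-m}(m)_qG\gamma_{\ell+1}^{m-1}$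 ($(m)_q=1+\cdots+q^{m-1}$), with comultiplication $\Delta(G)=G\otimes G$, $\Delta(X)=X\otimes G+1\otimes X$, $\Delta(e_i)=\sum_{s+t=i}e_s\otimes e_t$, $\Delta(a_i)=\sum_{s+t=i}(e_s\otimes a_t+q^ta_s\otimes e_t)$; tensor products of modules are over $k$ with action via $\Delta$. $E_u=\frac1n\sum_{i,j}q^{-i(u+j)}G^ie_j$. For an integer $r$, $\overline r^-\in\{0,\dots,d-1\}$ is its residue mod $d$. $L(u,j)$ is the simple module (unique up to isomorphism) of dimension $d-\overline{2j+u-1}^-$ on which $E_u$ acts as the identity and whose kernel of $X$ is one-dimensional, spanned by a vector $Y$ with $e_jY=Y$. *)

theory Defs
  imports "HOL-Analysis.Analysis" "HOL-Computational_Algebra.Polynomial"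
begin

(* Finite-dimensional modules are modelled concretely: a module of dimension CARD('p)
   is the coordinate space 'a^'p, and each generator of the Drinfel'd double acts by a
   matrix in 'a^'p^'p. Indices in Z_n are integers, with n-periodic families. *)

type_synonym ('a,'p) sqmat = "'a^'p^'p"

primrec mpow :: "('a::semiring_1,'p::finite) sqmat \<Rightarrow> nat \<Rightarrow> ('a,'p) sqmat" where
  "mpow A 0 = mat 1"
| "mpow A (Suc m) = A ** mpow A m"

primrec gam :: "(int \<Rightarrow> ('a::semiring_1,'p::finite) sqmat) \<Rightarrow> (int \<Rightarrow> ('a,'p) sqmat)
                 \<Rightarrow> int \<Rightarrow> nat \<Rightarrow> ('a,'p) sqmat" where
  "gam e a l 0 = e l"
| "gam e a l (Suc m) = a (l + int m) ** gam e a l m"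

definition qint :: "'a::field \<Rightarrow> nat \<Rightarrow> 'a" where
  "qint q m = (\<Sum>k<m. q ^ k)"

(* a representation of D(Lambda_{n,d}) on 'a^'p, given by the actions of G, X, e_l, a_l *)
definition drep :: "nat \<Rightarrow> nat \<Rightarrow> 'a::field \<Rightarrow> ('a,'p::finite) sqmat \<Rightarrow> ('a,'p) sqmat
      \<Rightarrow> (int \<Rightarrow> ('a,'p) sqmat) \<Rightarrow> (int \<Rightarrow> ('a,'p) sqmat) \<Rightarrow> bool" where
  "drep n d q G X e a \<longleftrightarrow>
     (\<forall>l. e (l + int n) = e l \<and> a (l + int n) = a l) \<and>
     mpow G n = mat 1 \<and>
     mpow X d = 0 \<and>
     G ** X = mat (inverse q) ** (X ** G) \<and>
     (\<forall>l l'. e l ** e l' = (if l mod int n = l' mod int n then e l else 0)) \<and>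
     (\<Sum>l\<in>{0..<int n}. e l) = mat 1 \<and>
     (\<forall>l. e (l + 1) ** a l = a l \<and> a l ** e l = a l) \<and>
     (\<forall>l. gam e a l d = 0) \<and>
     (\<forall>l m. m < d \<longrightarrow> gam e a l m ** G = mat (inverse q ^ m) ** (G ** gam e a l m)) \<and>
     (\<forall>l m. m < d \<longrightarrow>
        gam e a l m ** X =
          mat (inverse q ^ m) ** (X ** gam e a (l + 1) m)
          - mat (inverse q ^ m * qint q m) ** gam e a (l + 1) (m - 1)
          + mat (q powi (l + 1 - int m) * qint q m) ** (G ** gam e a (l + 1) (m - 1)))"

definition Eidem :: "nat \<Rightarrow> 'a::field \<Rightarrow> int \<Rightarrow> ('a,'p::finite) sqmat
      \<Rightarrow> (int \<Rightarrow> ('a,'p) sqmat) \<Rightarrow> ('a,'p) sqmat" where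
  "Eidem n q u G e =
     mat (inverse (of_nat n)) **
       (\<Sum>i<n. \<Sum>j\<in>{0..<int n}. mat (q powi (- (int i * (u + j)))) ** (mpow G i ** e j))"

definition dsimple :: "('a::field,'p::finite) sqmat \<Rightarrow> ('a,'p) sqmat
      \<Rightarrow> (int \<Rightarrow> ('a,'p) sqmat) \<Rightarrow> (int \<Rightarrow> ('a,'p) sqmat) \<Rightarrow> bool" where
  "dsimple G X e a \<longleftrightarrow>
     (\<forall>W. vec.subspace W \<and>
          (\<forall>w\<in>W. G *v w \<in> W \<and> X *v w \<in> W \<and> (\<forall>l. e l *v w \<in> W \<and> a l *v w \<in> W))
          \<longrightarrow> W = {0} \<or> W = UNIV)"

definition isL :: "nat \<Rightarrow> nat \<Rightarrow> 'a::field \<Rightarrow> int \<Rightarrow> int \<Rightarrow> ('a,'p::finite) sqmat \<Rightarrow> ('a,'p) sqmat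
      \<Rightarrow> (int \<Rightarrow> ('a,'p) sqmat) \<Rightarrow> (int \<Rightarrow> ('a,'p) sqmat) \<Rightarrow> bool" where
  "isL n d q u j G X e a \<longleftrightarrow>
     drep n d q G X e a \<and> dsimple G X e a \<and>
     int CARD('p) = int d - (2 * j + u - 1) mod int d \<and>
     Eidem n q u G e = mat 1 \<and>
     (\<exists>Y. Y \<noteq> 0 \<and> e j *v Y = Y \<and> {v. X *v v = 0} = vec.span {Y})"

definition kron :: "('a::semiring_1,'p::finite) sqmat \<Rightarrow> ('a,'r::finite) sqmat \<Rightarrow> ('a, 'p \<times> 'r) sqmat" where
  "kron A B = (\<chi> ik jl. A $ fst ik $ fst jl * B $ snd ik $ snd jl)"

definition vtens :: "'a::semiring_1^'p::finite \<Rightarrow> 'a^'r::finite \<Rightarrow> 'a^('p \<times> 'r)" where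
  "vtens v w = (\<chi> ik. v $ fst ik * w $ snd ik)"

(* Delta(X) = X (x) G + 1 (x) X acting on V (x) W *)
definition tensX :: "('a::semiring_1,'p::finite) sqmat \<Rightarrow> ('a,'p) sqmat \<Rightarrow> ('a,'r::finite) sqmat
      \<Rightarrow> ('a,'r) sqmat \<Rightarrow> ('a,'p \<times> 'r) sqmat" where
  "tensX X1 G1 X2 G2 = kron X1 G2 + kron (mat 1) X2"

end

theory Submission
  imports Defs
begin

lemma mv_sum: "(T::'a::field^'m^'n) *v (\<Sum>i\<in>I. f i) = (\<Sum>i\<in>I. T *v f i)"
  by (induction I rule: infinite_finite_induct) (auto simp: matrix_vector_right_distrib)

lemma shift_sum:
  fixes f :: "nat \<Rightarrow> 'b::comm_monoid_add"
  shows "(\<Sum>s<Suc m. (if s = 0 then 0 else f (s - 1))) = (\<Sum>s<Suc m. (if s + 1 < Suc m then f s else 0))"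
proof -
  have "(\<Sum>s<Suc m. (if s = 0 then 0 else f (s - 1))) = (\<Sum>s<m. f s)"
    by (subst sum.lessThan_Suc_shift) simp
  also have "\<dots> = (\<Sum>s<Suc m. (if s + 1 < Suc m then f s else 0))"
    by (simp add: sum.lessThan_Suc)
  finally show ?thesis .
qed

lemma sum_if_const: "(\<Sum>t\<in>I. if P then f t else 0) = (if P then (\<Sum>t\<in>I. f t) else 0)"
  by simp

locale tk =
  fixes z :: "nat \<Rightarrow> nat \<Rightarrow> 'a::field ^ 'm" and T :: "'a^'m^'m"
    and A :: "nat \<Rightarrow> nat \<Rightarrow> 'a" and B :: "nat \<Rightarrow> 'a" and \<alpha> \<beta> :: nat
  assumes ab: "\<alpha> \<le> \<beta>" and a0: "0 < \<alpha>"
  and ind: "\<And>c s t. (\<Sum>s<\<alpha>. \<Sum>t<\<beta>. c s t *s z s t) = 0 \<Longrightarrow> s<\<alpha> \<Longrightarrow> t<\<beta> \<Longrightarrow> c s t = 0"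
  and sp: "\<And>w. \<exists>c. w = (\<Sum>s<\<alpha>. \<Sum>t<\<beta>. c s t *s z s t)"
  and Tz: "\<And>s t. s<\<alpha> \<Longrightarrow> t<\<beta> \<Longrightarrow> T *v z s t =
      (if s=0 then 0 else A s t *s z (s-1) t) + (if t=0 then 0 else B t *s z s (t-1))"
  and An: "\<And>s t. 0<s \<Longrightarrow> s<\<alpha> \<Longrightarrow> t<\<beta> \<Longrightarrow> A s t \<noteq> 0"
  and Bn: "\<And>t. 0<t \<Longrightarrow> t<\<beta> \<Longrightarrow> B t \<noteq> 0"
begin

lemma ifscale: "(if s'=s \<and> t'=t then 1 else 0) *s x = (if s'=s then if t' = t then x else 0 else (0::'a^'m))"
  by simp

definition comb where "comb c = (\<Sum>s<\<alpha>. \<Sum>t<\<beta>. c s t *s z s t)"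

definition Tc where "Tc c s t = (if s+1<\<alpha> then A (s+1) t * c (s+1) t else 0)
   + (if t+1<\<beta> then B (t+1) * c s (t+1) else 0)"

lemma comb_add: "comb (\<lambda>s t. c1 s t + c2 s t) = comb c1 + comb c2"
  by (simp add: comb_def vec.scale_left_distrib sum.distrib)

lemma comb_scale: "comb (\<lambda>s t. k * c s t) = k *s comb c"
  by (simp add: comb_def vec.scale_sum_right)

lemma comb_diff: "comb (\<lambda>s t. c1 s t - c2 s t) = comb c1 - comb c2"
  by (simp add: comb_def vec.scale_left_diff_distrib sum_subtractf)

lemma comb_zero: "comb (\<lambda>s t. 0) = 0"
  by (simp add: comb_def)

lemma comb_sum: "finite I \<Longrightarrow> comb (\<lambda>s t. \<Sum>i\<in>I. f i s t) = (\<Sum>i\<in>I. comb (f i))"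
proof (induction I rule: finite_induct)
  case empty then show ?case by (simp add: comb_zero)
next
  case (insert x F)
  then show ?case by (simp add: comb_add)
qed

lemma comb_cong: "(\<And>s t. s<\<alpha> \<Longrightarrow> t<\<beta> \<Longrightarrow> c1 s t = c2 s t) \<Longrightarrow> comb c1 = comb c2"
  by (simp add: comb_def)

lemma comb_eq: "comb c1 = comb c2 \<Longrightarrow> s<\<alpha> \<Longrightarrow> t<\<beta> \<Longrightarrow> c1 s t = c2 s t"
  using ind[of "\<lambda>s t. c1 s t - c2 s t" s t] comb_diff[of c1 c2] by (simp add: comb_def)

lemma comb_delta: "s<\<alpha> \<Longrightarrow> t<\<beta> \<Longrightarrow> comb (\<lambda>s' t'. if s' = s \<and> t' = t then 1 else 0) = z s t"
proof -
  assume st: "s<\<alpha>" "t<\<beta>"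
  have "comb (\<lambda>s' t'. if s' = s \<and> t' = t then 1 else 0)
     = (\<Sum>s'<\<alpha>. if s' = s then (\<Sum>t'<\<beta>. if t' = t then z s' t' else 0) else 0)"
    unfolding comb_def ifscale by (simp only: sum_if_const)
  then show ?thesis using st by (simp add: sum.delta)
qed

lemma T_comb: "T *v comb c = comb (Tc c)"
proof -
  obtain a' where a': "\<alpha> = Suc a'" using a0 by (cases \<alpha>) auto
  obtain b' where b': "\<beta> = Suc b'" using a0 ab by (cases \<beta>) auto
  have "T *v comb c = (\<Sum>s<\<alpha>. \<Sum>t<\<beta>. c s t *s (T *v z s t))"
    by (simp add: comb_def mv_sum vector_scalar_commute)
  also have "\<dots> = (\<Sum>s<\<alpha>. \<Sum>t<\<beta>. (if s=0 then 0 else (c s t * A s t) *s z (s-1) t))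
      + (\<Sum>s<\<alpha>. \<Sum>t<\<beta>. (if t=0 then 0 else (c s t * B t) *s z s (t-1)))"
  proof -
    have "(\<Sum>s<\<alpha>. \<Sum>t<\<beta>. c s t *s (T *v z s t)) = (\<Sum>s<\<alpha>. \<Sum>t<\<beta>. (if s=0 then 0 else (c s t * A s t) *s z (s-1) t)
       + (if t=0 then 0 else (c s t * B t) *s z s (t-1)))"
      by (intro sum.cong refl) (auto simp: Tz vec.scale_right_distrib)
    then show ?thesis by (simp add: sum.distrib)
  qed
  also have "(\<Sum>s<\<alpha>. \<Sum>t<\<beta>. (if s=0 then 0 else (c s t * A s t) *s z (s-1) t))
     = (\<Sum>s<\<alpha>. (if s=0 then 0 else (\<lambda>s'. \<Sum>t<\<beta>. (c (s'+1) t * A (s'+1) t) *s z s' t) (s-1)))"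
    by (intro sum.cong) auto
  also have "\<dots> = (\<Sum>s<\<alpha>. (if s+1<\<alpha> then (\<Sum>t<\<beta>. (c (s+1) t * A (s+1) t) *s z s t) else 0))"
    unfolding a' by (rule shift_sum)
  also have "\<dots> = (\<Sum>s<\<alpha>. \<Sum>t<\<beta>. (if s+1<\<alpha> then A (s+1) t * c (s+1) t else 0) *s z s t)"
    by (intro sum.cong) (auto simp: mult.commute)
  also have "(\<Sum>s<\<alpha>. \<Sum>t<\<beta>. (if t=0 then 0 else (c s t * B t) *s z s (t-1)))
      = (\<Sum>s<\<alpha>. \<Sum>t<\<beta>. (if t+1<\<beta> then B (t+1) * c s (t+1) else 0) *s z s t)"
  proof (rule sum.cong[OF refl])
    fix s
    have "(\<Sum>t<\<beta>. (if t=0 then 0 else (c s t * B t) *s z s (t-1)))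
       = (\<Sum>t<\<beta>. (if t=0 then 0 else (\<lambda>t'. (c s (t'+1) * B (t'+1)) *s z s t') (t-1)))"
      by (intro sum.cong) auto
    also have "\<dots> = (\<Sum>t<\<beta>. (if t+1<\<beta> then (c s (t+1) * B (t+1)) *s z s t else 0))"
      unfolding b' by (rule shift_sum)
    also have "\<dots> = (\<Sum>t<\<beta>. (if t+1<\<beta> then B (t+1) * c s (t+1) else 0) *s z s t)"
      by (intro sum.cong) (auto simp: mult.commute)
    finally show "(\<Sum>t<\<beta>. (if t=0 then 0 else (c s t * B t) *s z s (t-1)))
      = (\<Sum>t<\<beta>. (if t+1<\<beta> then B (t+1) * c s (t+1) else 0) *s z s t)" .
  qed
  finally show ?thesis
    by (simp add: comb_def Tc_def vec.scale_left_distrib sum.distrib)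
qed


lemma zero_lemma:
  assumes K: "\<And>s t. s<\<alpha> \<Longrightarrow> t<\<beta> \<Longrightarrow> Tc c s t = 0" and Z: "\<And>t. t<\<alpha> \<Longrightarrow> c 0 t = 0"
    and st: "s<\<alpha>" "t<\<beta>"
  shows "c s t = 0"
proof -
  have P1: "\<And>s t. s + k + 1 = \<alpha> \<Longrightarrow> t < \<beta> \<Longrightarrow> k+1 \<le> t \<Longrightarrow> c s t = 0" for k
  proof (induction k)
    case 0
    fix s t assume h: "s + 0 + 1 = \<alpha>" "t < \<beta>" "0+1 \<le> t"
    have "Tc c s (t-1) = 0" using K[of s "t-1"] h by auto
    then have "B t * c s t = 0" using h by (simp add: Tc_def)
    then show "c s t = 0" using Bn[of t] h by auto
  next
    case (Suc k)
    fix s t assume h: "s + Suc k + 1 = \<alpha>" "t < \<beta>" "Suc k+1 \<le> t"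
    have c1: "c (s+1) (t-1) = 0" using Suc.IH[of "s+1" "t-1"] h by auto
    have "Tc c s (t-1) = 0" using K[of s "t-1"] h by auto
    then have "B t * c s t = 0" using h c1 by (simp add: Tc_def)
    then show "c s t = 0" using Bn[of t] h by auto
  qed
  have P2: "\<And>t. s + t < \<alpha> \<Longrightarrow> c s t = 0" for s
  proof (induction s)
    case 0 then show ?case using Z by simp
  next
    case (Suc s)
    fix t assume h: "Suc s + t < \<alpha>"
    have c1: "c s (t+1) = 0" using Suc.IH[of "t+1"] h by auto
    have "Tc c s t = 0" using K[of s t] h ab by auto
    moreover have "Tc c s t = A (s+1) t * c (s+1) t" using h c1 by (simp add: Tc_def)
    ultimately have "A (s+1) t * c (s+1) t = 0" by simp
    then show "c (Suc s) t = 0" using An[of "s+1" t] h ab by auto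
  qed
  show ?thesis
  proof (cases "s + t < \<alpha>")
    case True then show ?thesis using P2 by blast
  next
    case False
    then show ?thesis using P1[of s "\<alpha> - s - 1" t] st by auto
  qed
qed

primrec kap :: "nat \<Rightarrow> nat \<Rightarrow> 'a" where
  "kap \<theta> 0 = 1"
| "kap \<theta> (Suc s) = - B (\<theta> - s) * kap \<theta> s / A (Suc s) (\<theta> - Suc s)"

definition cc where "cc \<theta> s t = (if s + t = \<theta> then kap \<theta> s else 0)"

definition xv where "xv \<theta> = comb (cc \<theta>)"

lemma Tc_cc: assumes "\<theta> < \<alpha>" "s<\<alpha>" "t<\<beta>" shows "Tc (cc \<theta>) s t = 0"
proof (cases "s + t + 1 = \<theta>")
  case True
  then have e1: "\<theta> - s = Suc t" "\<theta> - Suc s = t" by auto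
  have An': "A (Suc s) t \<noteq> 0" using An[of "Suc s" t] assms True by auto
  show ?thesis using True assms ab An' unfolding Tc_def cc_def by (simp add: e1 field_simps)
next
  case False
  then show ?thesis unfolding Tc_def cc_def by auto
qed

lemma K_coords: "T *v comb c = 0 \<Longrightarrow> s<\<alpha> \<Longrightarrow> t<\<beta> \<Longrightarrow> Tc c s t = 0"
  using ind[of "Tc c" s t] T_comb[of c] by (simp add: comb_def)

lemma T_xv: "\<theta> < \<alpha> \<Longrightarrow> T *v xv \<theta> = 0"
  unfolding xv_def T_comb using comb_cong[of "Tc (cc \<theta>)" "\<lambda>s t. 0"] Tc_cc comb_zero by auto

definition hom where "hom \<theta> = vec.span {z s t | s t. s<\<alpha> \<and> t<\<beta> \<and> s+t=\<theta>}"

lemma hom_coords: "w \<in> hom \<theta> \<Longrightarrow> \<exists>c. w = comb c \<and> (\<forall>s t. s+t \<noteq> \<theta> \<longrightarrow> c s t = 0)"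
  unfolding hom_def
proof (induction rule: vec.span_induct_alt)
  case base
  then show ?case using comb_zero by auto
next
  case (step k x y)
  then obtain s t where x: "x = z s t" "s<\<alpha>" "t<\<beta>" "s+t=\<theta>" by blast
  from step obtain c where c: "y = comb c" "\<forall>s t. s+t \<noteq> \<theta> \<longrightarrow> c s t = 0" by blast
  let ?c = "\<lambda>s' t'. k * (if s' = s \<and> t' = t then 1 else 0) + c s' t'"
  have "k *s x + y = comb ?c"
    using comb_add[of "\<lambda>s' t'. k * (if s' = s \<and> t' = t then 1 else 0)" c] comb_scale comb_delta x c
    by simp
  moreover have "\<forall>s' t'. s'+t' \<noteq> \<theta> \<longrightarrow> ?c s' t' = 0" using c x by auto
  ultimately show ?case by blast
qed

lemma subK: "vec.subspace {x. T *v x = 0}"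
  by (auto simp: vec.subspace_def matrix_vector_right_distrib vector_scalar_commute)

lemma xv_hom: "xv \<theta> \<in> hom \<theta>"
  unfolding xv_def comb_def hom_def
proof (intro vec.span_sum)
  fix s t assume "s \<in> {..<\<alpha>}" "t \<in> {..<\<beta>}"
  then show "cc \<theta> s t *s z s t \<in> vec.span {z s t | s t. s<\<alpha> \<and> t<\<beta> \<and> s+t=\<theta>}"
  proof (cases "s+t=\<theta>")
    case True
    have "z s t \<in> vec.span {z s t | s t. s<\<alpha> \<and> t<\<beta> \<and> s+t=\<theta>}"
      by (rule vec.span_base) (use True \<open>s \<in> {..<\<alpha>}\<close> \<open>t \<in> {..<\<beta>}\<close> in auto)
    then show ?thesis by (rule vec.span_scale)
  next
    case False then show ?thesis by (simp add: cc_def vec.span_zero)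
  qed
qed

lemma cc0: "cc \<theta> 0 t = (if t = \<theta> then 1 else 0)"
  by (simp add: cc_def)

lemma sum_cc0: "t<\<alpha> \<Longrightarrow> (\<Sum>\<theta><\<alpha>. f \<theta> * cc \<theta> 0 t) = f t"
proof -
  assume t: "t<\<alpha>"
  have "(\<Sum>\<theta><\<alpha>. f \<theta> * cc \<theta> 0 t) = (\<Sum>\<theta><\<alpha>. if \<theta> = t then f \<theta> else 0)"
    by (intro sum.cong) (auto simp: cc0)
  then show ?thesis using t by simp
qed

lemma main:
  "vec.dim {x. T *v x = 0} = \<alpha> \<and>
   (\<exists>x. (\<forall>\<theta><\<alpha>. x \<theta> \<noteq> 0 \<and> x \<theta> \<in> hom \<theta> \<and> {x. T *v x = 0} \<inter> hom \<theta> = vec.span {x \<theta>}) \<and>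
         vec.span (x ` {..<\<alpha>}) = {x. T *v x = 0})"
proof -
  let ?K = "{x. T *v x = 0}"
  have nz: "xv \<theta> \<noteq> 0" if "\<theta> < \<alpha>" for \<theta>
  proof
    assume "xv \<theta> = 0"
    then have "comb (cc \<theta>) = comb (\<lambda>s t. 0)" by (simp add: xv_def comb_zero)
    then have "cc \<theta> 0 \<theta> = 0" using comb_eq[of "cc \<theta>" "\<lambda>s t. 0" 0 \<theta>] that a0 ab by auto
    then show False by (simp add: cc0)
  qed
  have KH: "?K \<inter> hom \<theta> = vec.span {xv \<theta>}" if th: "\<theta> < \<alpha>" for \<theta>
  proof
    show "vec.span {xv \<theta>} \<subseteq> ?K \<inter> hom \<theta>"
      using T_xv[OF th] xv_hom[of \<theta>] subK
      by (intro vec.span_minimal) (auto simp: hom_def vec.subspace_inter)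
  next
    show "?K \<inter> hom \<theta> \<subseteq> vec.span {xv \<theta>}"
    proof
      fix w assume w: "w \<in> ?K \<inter> hom \<theta>"
      then obtain c where c: "w = comb c" "\<forall>s t. s+t \<noteq> \<theta> \<longrightarrow> c s t = 0"
        using hom_coords by blast
      let ?c = "\<lambda>s t. c s t - c 0 \<theta> * cc \<theta> s t"
      have e: "comb ?c = w - c 0 \<theta> *s xv \<theta>"
        by (simp add: comb_diff comb_scale xv_def c)
      have "T *v comb ?c = 0" unfolding e using w T_xv[OF th]
        by (simp add: matrix_vector_mult_diff_distrib vector_scalar_commute)
      then have Kc: "\<And>s t. s<\<alpha> \<Longrightarrow> t<\<beta> \<Longrightarrow> Tc ?c s t = 0" using K_coords by blast
      have Zc: "\<And>t. t<\<alpha> \<Longrightarrow> ?c 0 t = 0" using c(2) by (auto simp: cc0)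
      have "comb ?c = comb (\<lambda>s t. 0)" by (rule comb_cong) (rule zero_lemma[OF Kc Zc])
      then have "w = c 0 \<theta> *s xv \<theta>" using e comb_zero by simp
      then show "w \<in> vec.span {xv \<theta>}" by (simp add: vec.span_base vec.span_scale)
    qed
  qed
  have SP: "vec.span (xv ` {..<\<alpha>}) = ?K"
  proof
    show "vec.span (xv ` {..<\<alpha>}) \<subseteq> ?K"
      using T_xv subK by (intro vec.span_minimal) auto
  next
    show "?K \<subseteq> vec.span (xv ` {..<\<alpha>})"
    proof
      fix w assume w: "w \<in> ?K"
      obtain c where c: "w = comb c" using sp[of w] unfolding comb_def by blast
      let ?c = "\<lambda>s t. c s t - (\<Sum>\<theta><\<alpha>. c 0 \<theta> * cc \<theta> s t)"
      have e: "comb ?c = w - (\<Sum>\<theta><\<alpha>. c 0 \<theta> *s xv \<theta>)"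
        using comb_sum[of "{..<\<alpha>}" "\<lambda>\<theta> s t. c 0 \<theta> * cc \<theta> s t"]
        by (simp add: comb_diff comb_scale xv_def c)
      have "T *v comb ?c = 0" unfolding e using w T_xv
        by (simp add: matrix_vector_mult_diff_distrib vector_scalar_commute mv_sum)
      then have Kc: "\<And>s t. s<\<alpha> \<Longrightarrow> t<\<beta> \<Longrightarrow> Tc ?c s t = 0" using K_coords by blast
      have Zc: "?c 0 t = 0" if "t < \<alpha>" for t
        using that by (simp add: sum_cc0)
      have "comb ?c = comb (\<lambda>s t. 0)" by (rule comb_cong) (rule zero_lemma[OF Kc Zc])
      then have "w = (\<Sum>\<theta><\<alpha>. c 0 \<theta> *s xv \<theta>)" using e comb_zero by simp
      moreover have "(\<Sum>\<theta><\<alpha>. c 0 \<theta> *s xv \<theta>) \<in> vec.span (xv ` {..<\<alpha>})"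
        by (intro vec.span_sum vec.span_scale) (auto intro: vec.span_base)
      ultimately show "w \<in> vec.span (xv ` {..<\<alpha>})" by simp
    qed
  qed
  have inj: "inj_on xv {..<\<alpha>}"
  proof
    fix a b assume ab': "a \<in> {..<\<alpha>}" "b \<in> {..<\<alpha>}" "xv a = xv b"
    then have "cc a 0 a = cc b 0 a" using comb_eq[of "cc a" "cc b" 0 a] a0 ab by (auto simp: xv_def)
    then show "a = b" by (simp add: cc0 split: if_splits)
  qed
  have indep: "vec.independent (xv ` {..<\<alpha>})"
  proof (rule vec.independent_if_scalars_zero)
    show "finite (xv ` {..<\<alpha>})" by simp
  next
    fix f v assume h: "(\<Sum>x\<in>xv ` {..<\<alpha>}. f x *s x) = 0" "v \<in> xv ` {..<\<alpha>}"
    then obtain \<theta> where th: "\<theta> < \<alpha>" "v = xv \<theta>" by auto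
    have "(\<Sum>t<\<alpha>. f (xv t) *s xv t) = 0" using h(1) by (simp add: sum.reindex[OF inj])
    then have "comb (\<lambda>s t. \<Sum>\<theta>'<\<alpha>. f (xv \<theta>') * cc \<theta>' s t) = comb (\<lambda>s t. 0)"
      using comb_sum[of "{..<\<alpha>}" "\<lambda>\<theta> s t. f (xv \<theta>) * cc \<theta> s t"]
      by (simp add: comb_zero comb_scale xv_def)
    then have "(\<Sum>\<theta>'<\<alpha>. f (xv \<theta>') * cc \<theta>' 0 \<theta>) = 0"
      using comb_eq[of _ "\<lambda>s t. 0" 0 \<theta>] th a0 ab by auto
    then show "f v = 0" using th by (simp add: sum_cc0)
  qed
  have "vec.dim ?K = \<alpha>"
    using vec.dim_span_eq_card_independent[OF indep] SP card_image[OF inj] by simp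
  then show ?thesis using nz xv_hom KH SP by blast
qed

end

lemma mat_mult_vec: "mat (c::'a::field) *v v = c *s v"
  by (simp add: mat_def matrix_vector_mult_def vector_scalar_mult_def vec_eq_iff if_distrib[of "\<lambda>x. x * _"] sum.delta cong: if_cong)

lemma mod_distinct:
  fixes i :: int
  assumes "s < n" "s' < n" "s \<noteq> s'"
  shows "(i + int s) mod int n \<noteq> (i + int s') mod int n"
proof
  assume "(i + int s) mod int n = (i + int s') mod int n"
  then have "int n dvd (i + int s) - (i + int s')" by (simp add: mod_eq_dvd_iff)
  then have "int n dvd int s - int s'" by simp
  then have "int s mod int n = int s' mod int n" by (simp add: mod_eq_dvd_iff)
  then have "s mod n = s' mod n" by (metis of_nat_mod of_nat_eq_iff)
  then show False using assms by simp
qed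

locale modl =
  fixes n d :: nat and q :: "'a::field" and G X :: "('a,'p::finite) sqmat"
    and e a :: "int \<Rightarrow> ('a,'p) sqmat" and i :: int and h :: "'a^'p"
  assumes dr: "drep n d q G X e a" and sim: "dsimple G X e a"
   and d2: "d \<ge> 2" and dn: "d dvd n" and n0: "n \<noteq> 0" and q0: "q \<noteq> 0"
   and h0: "h \<noteq> 0" and Xh: "X *v h = 0" and eh: "e i *v h = h"
   and kerh: "\<And>v. X *v v = 0 \<Longrightarrow> \<exists>k. v = k *s h"
begin

lemma dn': "d \<le> n" using dn n0 by (simp add: dvd_imp_le)

lemma D1: "\<forall>l. e (l + int n) = e l \<and> a (l + int n) = a l"
  using dr unfolding drep_def by (elim conjE) assumption
lemma D2: "mpow G n = mat 1" using dr unfolding drep_def by (elim conjE) assumption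
lemma D4: "G ** X = mat (inverse q) ** (X ** G)" using dr unfolding drep_def by (elim conjE) assumption
lemma D5: "\<forall>l l'. e l ** e l' = (if l mod int n = l' mod int n then e l else 0)"
  using dr unfolding drep_def by (elim conjE) assumption
lemma D7: "\<forall>l. e (l + 1) ** a l = a l \<and> a l ** e l = a l"
  using dr unfolding drep_def by (elim conjE) assumption
lemma D8: "\<forall>l. gam e a l d = 0"
  using dr unfolding drep_def by (elim conjE) assumption
lemma D9: "\<forall>l m. m < d \<longrightarrow> gam e a l m ** G = mat (inverse q ^ m) ** (G ** gam e a l m)"
  using dr unfolding drep_def by (elim conjE) assumption
lemma D10: "\<forall>l m. m < d \<longrightarrow>
        gam e a l m ** X =
          mat (inverse q ^ m) ** (X ** gam e a (l + 1) m)
          - mat (inverse q ^ m * qint q m) ** gam e a (l + 1) (m - 1)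
          + mat (q powi (l + 1 - int m) * qint q m) ** (G ** gam e a (l + 1) (m - 1))"
  using dr unfolding drep_def by (elim conjE) assumption

lemma perE: "e (l + int n) = e l" and perA: "a (l + int n) = a l"
  using D1 by auto

lemma perk: "e (l + int n * int k) = e l \<and> a (l + int n * int k) = a l"
proof (induction k arbitrary: l)
  case 0 then show ?case by simp
next
  case (Suc k)
  have eq: "l + int n * int (Suc k) = (l + int n * int k) + int n" by (simp add: algebra_simps)
  show ?case unfolding eq using Suc.IH[of l] perE[of "l + int n * int k"] perA[of "l + int n * int k"] by simp
qed

lemma per_mod: assumes "l mod int n = l' mod int n" shows "e l = e l' \<and> a l = a l'"
proof -
  have "int n dvd l - l'" using assms by (simp add: mod_eq_dvd_iff)
  then obtain k where k: "l - l' = int n * k" by (auto elim: dvdE)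
  show ?thesis
  proof (cases "k \<ge> 0")
    case True
    then obtain m where "k = int m" using nonneg_int_cases by blast
    then have "l = l' + int n * int m" using k by simp
    then show ?thesis using perk[of l' m] by simp
  next
    case False
    define m where "m = nat (- k)"
    have "k = - int m" using False by (simp add: m_def)
    then have "l' = l + int n * int m" using k by simp
    then show ?thesis using perk[of l m] by simp
  qed
qed

lemma ee: "e l ** e l' = (if l mod int n = l' mod int n then e l else 0)"
  using D5 by blast

lemma ae: "a l ** e l = a l" and ea: "e (l + 1) ** a l = a l"
  using D7 by auto

lemma gamd: "gam e a l d = 0" using D8 by blast

lemma gG: "m < d \<Longrightarrow> gam e a l m ** G = mat (inverse q ^ m) ** (G ** gam e a l m)"
  using D9 by blast

lemma gX: "m < d \<Longrightarrow> gam e a l m ** X = mat (inverse q ^ m) ** (X ** gam e a (l + 1) m) - mat (inverse q ^ m * qint q m) ** gam e a (l + 1) (m - 1) + mat (q powi (l + 1 - int m) * qint q m) ** (G ** gam e a (l + 1) (m - 1))"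
  using D10 by blast

lemma GX: "G ** X = mat (inverse q) ** (X ** G)" using D4 .
lemma Gn: "mpow G n = mat 1" using D2 .

definition hs where "hs s = gam e a i s *v h"

lemma egam: "e (l + int m) ** gam e a l m = gam e a l m"
proof (induction m)
  case 0 then show ?case by (simp add: ee)
next
  case (Suc m)
  have eq: "l + int (Suc m) = (l + int m) + 1" by simp
  have "e (l + int (Suc m)) ** gam e a l (Suc m) = (e (l + int m + 1) ** a (l + int m)) ** gam e a l m"
    unfolding eq by (simp only: gam.simps matrix_mul_assoc)
  then show ?case by (simp add: ea)
qed

lemma ehs: "e (i + int s) *v hs s = hs s"
  unfolding hs_def by (simp add: matrix_vector_mul_assoc egam)

lemma hs0: "hs 0 = h" by (simp add: hs_def eh)

lemma hsSuc: "hs (Suc s) = a (i + int s) *v hs s"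
  by (simp add: hs_def matrix_vector_mul_assoc)

lemma gam_big: "gam e a l (d + k) = 0"
  by (induction k) (auto simp: gamd)

lemma hs_big: "s \<ge> d \<Longrightarrow> hs s = 0"
  using gam_big[of i "s - d"] by (simp add: hs_def)

lemma e_hs: "e l *v hs s = (if l mod int n = (i + int s) mod int n then hs s else 0)"
proof -
  have "e l *v hs s = e l *v (e (i + int s) *v hs s)" by (simp only: ehs)
  also have "\<dots> = (e l ** e (i + int s)) *v hs s" by (simp only: matrix_vector_mul_assoc)
  finally have 1: "e l *v hs s = (e l ** e (i + int s)) *v hs s" .
  show ?thesis
  proof (cases "l mod int n = (i + int s) mod int n")
    case True
    then have "e l = e (i + int s)" using per_mod[OF True] by simp
    then show ?thesis using True ehs by simp
  next
    case False
    then have "e l ** e (i + int s) = 0" by (simp add: ee)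
    then show ?thesis using False 1 by simp
  qed
qed

lemma a_hs: "a l *v hs s = (if l mod int n = (i + int s) mod int n then hs (Suc s) else 0)"
proof (cases "l mod int n = (i + int s) mod int n")
  case True
  then have "a l = a (i + int s)" using per_mod[OF True] by simp
  then show ?thesis using True by (simp add: hsSuc)
next
  case False
  have "a l *v hs s = a l *v (e (i + int s) *v hs s)" by (simp only: ehs)
  also have "\<dots> = ((a l ** e l) ** e (i + int s)) *v hs s" by (simp only: matrix_vector_mul_assoc ae)
  also have "\<dots> = 0" using False by (simp add: ee flip: matrix_mul_assoc)
  finally show ?thesis using False by simp
qed

lemma Gh: "\<exists>c. G *v h = c *s h"
proof -
  have "G *v (X *v h) = inverse q *s (X *v (G *v h))"
    by (simp only: matrix_vector_mul_assoc GX) (simp add: mat_mult_vec flip: matrix_vector_mul_assoc)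
  then have "X *v (G *v h) = 0" using Xh q0 by simp
  then show ?thesis using kerh by blast
qed

definition cG where "cG = (SOME c. G *v h = c *s h)"
lemma cG: "G *v h = cG *s h" unfolding cG_def using Gh by (rule someI_ex)

lemma G_hs: "G *v hs s = (cG * q ^ s) *s hs s"
proof (cases "s < d")
  case True
  have "gam e a i s *v (G *v h) = inverse q ^ s *s (G *v hs s)"
    by (simp only: matrix_vector_mul_assoc gG[OF True]) (simp add: hs_def mat_mult_vec flip: matrix_vector_mul_assoc)
  then have "cG *s hs s = inverse q ^ s *s (G *v hs s)"
    by (simp add: cG vector_scalar_commute hs_def)
  then have "q ^ s *s (cG *s hs s) = G *v hs s"
    using q0 by (simp add: vec.scale_scale power_inverse flip: power_mult_distrib)
  then show ?thesis by (simp add: vec.scale_scale mult.commute)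
next
  case False then show ?thesis by (simp add: hs_big)
qed

lemma cG0: "cG \<noteq> 0"
proof
  assume c: "cG = 0"
  have pk: "mpow G k *v h = cG ^ k *s h" for k
    by (induction k) (auto simp: cG vector_scalar_commute vec.scale_scale simp flip: matrix_vector_mul_assoc)
  have hh: "h = cG ^ n *s h" using pk[of n] by (simp only: Gn matrix_vector_mul_lid)
  have "cG ^ n = 0" using c n0 by simp
  then have "h = 0" using hh by (metis vec.scale_zero_left)
  then show False using h0 by simp
qed

lemma X_hs: "\<exists>lam. X *v hs (Suc s) = lam *s hs s"
proof (cases "Suc s < d")
  case True
  have "gam e a (i - 1) (Suc s) *v (X *v h) = 0" by (simp add: Xh)
  then have "(gam e a (i - 1) (Suc s) ** X) *v h = 0" by (simp add: matrix_vector_mul_assoc)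
  then have "inverse q ^ Suc s *s (X *v hs (Suc s)) - (inverse q ^ Suc s * qint q (Suc s)) *s hs s
     + (q powi (i - int (Suc s)) * qint q (Suc s)) *s (G *v hs s) = 0"
    by (simp only: gX[OF True]) (simp add: matrix_vector_mult_add_rdistrib matrix_vector_mult_diff_rdistrib mat_mult_vec hs_def flip: matrix_vector_mul_assoc)
  then have "inverse q ^ Suc s *s (X *v hs (Suc s)) = ((inverse q ^ Suc s * qint q (Suc s))
     - (q powi (i - int (Suc s)) * qint q (Suc s)) * (cG * q ^ s)) *s hs s"
    by (simp add: G_hs vec.scale_scale vec.scale_left_diff_distrib algebra_simps)
  then have "X *v hs (Suc s) = (q ^ Suc s * ((inverse q ^ Suc s * qint q (Suc s))
     - (q powi (i - int (Suc s)) * qint q (Suc s)) * (cG * q ^ s))) *s hs s"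
  proof -
    have qn: "q ^ Suc s \<noteq> 0" using q0 by (rule power_not_zero)
    have qq: "q ^ Suc s * inverse q ^ Suc s = 1" using qn by (metis power_inverse right_inverse)
    have "X *v hs (Suc s) = q ^ Suc s *s (inverse q ^ Suc s *s (X *v hs (Suc s)))"
      by (simp only: vec.scale_scale qq vec.scale_one)
    then show ?thesis by (simp only: \<open>inverse q ^ Suc s *s (X *v hs (Suc s)) = _\<close> vec.scale_scale)
  qed
  then show ?thesis by blast
next
  case False then show ?thesis using hs_big[of "Suc s"] by auto
qed

definition lam where "lam s = (SOME l. X *v hs (Suc s) = l *s hs s)"
lemma lam: "X *v hs (Suc s) = lam s *s hs s" unfolding lam_def using X_hs by (rule someI_ex)

lemma X_hs_nz: assumes "hs s \<noteq> 0" "0 < s" "s < n" shows "X *v hs s \<noteq> 0"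
proof
  assume "X *v hs s = 0"
  then obtain k where k: "hs s = k *s h" using kerh by blast
  have "e (i + int s) *v h = (e (i + int s) ** e i) *v h" by (simp add: eh flip: matrix_vector_mul_assoc)
  also have "\<dots> = 0" using mod_distinct[of s n 0 i] assms by (simp add: ee)
  finally have "hs s = 0" using ehs[of s] k by (simp add: vector_scalar_commute)
  then show False using assms by simp
qed

end

context modl begin

lemma inv_span:
  assumes M: "\<And>s. M *v hs s \<in> vec.span (range hs)" and w: "w \<in> vec.span (range hs)"
  shows "M *v w \<in> vec.span (range hs)"
  using w
proof (induction rule: vec.span_induct_alt)
  case base then show ?case by (simp add: vec.span_zero)
next
  case (step c x y)
  then obtain s where "x = hs s" by blast
  then have "M *v (c *s x + y) = c *s (M *v hs s) + M *v y"
    by (simp add: matrix_vector_right_distrib vector_scalar_commute)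
  then show ?case using M[of s] step by (simp add: vec.span_add vec.span_scale)
qed

lemma hs_in: "hs s \<in> vec.span (range hs)" by (rule vec.span_base) simp

lemma W_UNIV: "vec.span (range hs) = UNIV"
proof -
  let ?W = "vec.span (range hs)"
  have G: "G *v w \<in> ?W" if "w \<in> ?W" for w
    by (rule inv_span[OF _ that]) (simp add: G_hs vec.span_scale hs_in)
  have X: "X *v w \<in> ?W" if "w \<in> ?W" for w
  proof (rule inv_span[OF _ that])
    fix s show "X *v hs s \<in> ?W"
    proof (cases s)
      case 0 then show ?thesis by (simp add: hs0 Xh vec.span_zero)
    next
      case (Suc s') then show ?thesis by (simp add: lam vec.span_scale hs_in)
    qed
  qed
  have E: "e l *v w \<in> ?W" if "w \<in> ?W" for w l
    by (rule inv_span[OF _ that]) (simp add: e_hs hs_in vec.span_zero)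
  have A: "a l *v w \<in> ?W" if "w \<in> ?W" for w l
    by (rule inv_span[OF _ that]) (simp add: a_hs hs_in vec.span_zero)
  have "?W = {0} \<or> ?W = UNIV"
    using sim unfolding dsimple_def
    by (metis (no_types, lifting) G X E A vec.subspace_span)
  moreover have "?W \<noteq> {0}" using hs_in[of 0] h0 by (auto simp: hs0)
  ultimately show ?thesis by blast
qed

definition m0 where "m0 = (LEAST s. hs s = 0)"

lemma hs_d: "hs d = 0" by (rule hs_big) simp

lemma m0: "hs m0 = 0" unfolding m0_def using hs_d by (rule LeastI)
lemma m0d: "m0 \<le> d" unfolding m0_def using hs_d by (rule Least_le)
lemma hs_nz: "s < m0 \<Longrightarrow> hs s \<noteq> 0" unfolding m0_def by (rule not_less_Least)
lemma hs_z: "m0 \<le> s \<Longrightarrow> hs s = 0"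
proof -
  have "hs (m0 + k) = 0" for k
    by (induction k) (simp_all add: m0 hsSuc)
  then show "m0 \<le> s \<Longrightarrow> hs s = 0" by (metis le_add_diff_inverse)
qed

lemma span_m0: "vec.span (hs ` {..<m0}) = UNIV"
proof -
  have "range hs \<subseteq> insert 0 (hs ` {..<m0})"
  proof
    fix y assume "y \<in> range hs"
    then obtain s where "y = hs s" by auto
    then show "y \<in> insert 0 (hs ` {..<m0})" using hs_z[of s] by (cases "s < m0") auto
  qed
  then have "vec.span (range hs) \<subseteq> vec.span (insert 0 (hs ` {..<m0}))" by (rule vec.span_mono)
  then show ?thesis using W_UNIV by (simp add: vec.span_insert_0 top.extremum_unique)
qed

lemma modeq: "s < m0 \<Longrightarrow> s' < m0 \<Longrightarrow> ((i + int s) mod int n = (i + int s') mod int n) = (s = s')"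
  using mod_distinct[of s n s' i] m0d dn' by auto

lemma inj_m0: "inj_on hs {..<m0}"
proof
  fix s s' assume h: "s \<in> {..<m0}" "s' \<in> {..<m0}" "hs s = hs s'"
  have "e (i + int s) *v hs s' = (if s = s' then hs s' else 0)"
    using h by (simp add: e_hs modeq)
  then show "s = s'" using h ehs[of s] hs_nz[of s] by (auto split: if_splits)
qed

lemma indep_m0: "vec.independent (hs ` {..<m0})"
proof (rule vec.independent_if_scalars_zero)
  show "finite (hs ` {..<m0})" by simp
next
  fix f x assume h: "(\<Sum>x\<in>hs ` {..<m0}. f x *s x) = 0" "x \<in> hs ` {..<m0}"
  then obtain s0 where s0: "s0 < m0" "x = hs s0" by auto
  have "(\<Sum>s<m0. f (hs s) *s hs s) = 0" using h(1) by (simp add: sum.reindex[OF inj_m0])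
  then have "e (i + int s0) *v (\<Sum>s<m0. f (hs s) *s hs s) = 0" by simp
  then have "(\<Sum>s<m0. f (hs s) *s (e (i + int s0) *v hs s)) = 0"
    by (simp add: mv_sum vector_scalar_commute)
  moreover have "(\<Sum>s<m0. f (hs s) *s (e (i + int s0) *v hs s)) = (\<Sum>s<m0. if s = s0 then f (hs s) *s hs s else 0)"
    by (intro sum.cong refl) (use s0 in \<open>auto simp: e_hs modeq\<close>)
  ultimately have "f (hs s0) *s hs s0 = 0" using s0 by simp
  then show "f x = 0" using s0 hs_nz[of s0] by simp
qed

lemma m0_card: "m0 = CARD('p)"
proof -
  have 1: "vec.dim (vec.span (hs ` {..<m0})) = card (hs ` {..<m0})"
    by (rule vec.dim_span_eq_card_independent[OF indep_m0])
  have 2: "vec.dim (UNIV :: ('a^'p) set) = CARD('p)" by (rule vec_dim_card)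
  have "vec.dim (UNIV :: ('a^'p) set) = card (hs ` {..<m0})" using 1 by (simp only: span_m0)
  then show ?thesis using 2 card_image[OF inj_m0] by simp
qed

lemma lam_nz: "Suc s < CARD('p) \<Longrightarrow> lam s \<noteq> 0"
  using X_hs_nz[of "Suc s"] hs_nz[of "Suc s"] m0_card m0d dn' lam[of s] by auto

lemma modl_final:
  "inj_on hs {..<CARD('p)} \<and> vec.span (hs ` {..<CARD('p)}) = UNIV"
  using inj_m0 span_m0 m0_card by simp

end

lemma vtens_add_l: "vtens (x + y) w = vtens x w + vtens y w"
  by (simp add: vtens_def vec_eq_iff algebra_simps)
lemma vtens_add_r: "vtens v (x + y) = vtens v x + vtens v y"
  by (simp add: vtens_def vec_eq_iff algebra_simps)
lemma vtens_scale_l: "vtens (k *s x) w = k *s vtens x (w::'a::field^'r)"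
  by (simp add: vtens_def vec_eq_iff vector_scalar_mult_def algebra_simps)
lemma vtens_scale_r: "vtens v (k *s x) = k *s vtens (v::'a::field^'p) x"
  by (simp add: vtens_def vec_eq_iff vector_scalar_mult_def algebra_simps)
lemma vtens_zero_l: "vtens 0 w = 0" by (simp add: vtens_def vec_eq_iff)
lemma vtens_zero_r: "vtens v 0 = 0" by (simp add: vtens_def vec_eq_iff)

lemma kron_vtens: "kron A B *v vtens v w = vtens (A *v v) (B *v (w::'a::field^'r))"
proof -
  have "(kron A B *v vtens v w) $ ik = (vtens (A *v v) (B *v w)) $ ik" for ik
  proof -
    obtain p r where ik: "ik = (p, r)" by (cases ik)
    have "(vtens (A *v v) (B *v w)) $ ik = (\<Sum>j\<in>UNIV. A $ p $ j * v $ j) * (\<Sum>l\<in>UNIV. B $ r $ l * w $ l)"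
      by (simp add: vtens_def matrix_vector_mult_def ik)
    also have "\<dots> = (\<Sum>j\<in>UNIV. \<Sum>l\<in>UNIV. (A $ p $ j * v $ j) * (B $ r $ l * w $ l))"
      by (rule sum_product)
    also have "\<dots> = (\<Sum>jl\<in>UNIV \<times> UNIV. (A $ p $ fst jl * v $ fst jl) * (B $ r $ snd jl * w $ snd jl))"
      by (simp add: sum.cartesian_product case_prod_beta)
    also have "\<dots> = (kron A B *v vtens v w) $ ik"
      by (simp add: kron_def vtens_def matrix_vector_mult_def ik mult_ac)
    finally show ?thesis by simp
  qed
  then show ?thesis by (simp add: vec_eq_iff)
qed

lemma tensX_vtens: "tensX X1 G1 X2 G2 *v vtens v w = vtens (X1 *v v) (G2 *v w) + vtens v (X2 *v (w::'a::field^'r))"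
  by (simp add: tensX_def matrix_vector_mult_add_rdistrib kron_vtens)

lemma vtens_span:
  fixes S1 :: "('a::field^'p) set" and S2 :: "('a^'r) set"
  assumes s1: "vec.span S1 = UNIV" and s2: "vec.span S2 = UNIV"
  shows "vec.span {vtens x y | x y. x \<in> S1 \<and> y \<in> S2} = UNIV"
proof -
  let ?P = "{vtens x y | x y. x \<in> S1 \<and> y \<in> S2}"
  have st1: "vtens v y \<in> vec.span ?P" if y: "y \<in> S2" for v y
  proof -
    have "v \<in> vec.span S1" using s1 by simp
    then show ?thesis
    proof (induction rule: vec.span_induct_alt)
      case base then show ?case by (simp add: vtens_zero_l vec.span_zero)
    next
      case (step c x v')
      have "vtens x y \<in> vec.span ?P" using step y by (intro vec.span_base) blast
      then show ?case using step by (simp add: vtens_add_l vtens_scale_l vec.span_add vec.span_scale)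
    qed
  qed
  have st2: "vtens v w \<in> vec.span ?P" for v w
  proof -
    have "w \<in> vec.span S2" using s2 by simp
    then show ?thesis
    proof (induction rule: vec.span_induct_alt)
      case base then show ?case by (simp add: vtens_zero_r vec.span_zero)
    next
      case (step c y w')
      then show ?case using st1[of y v] by (simp add: vtens_add_r vtens_scale_r vec.span_add vec.span_scale)
    qed
  qed
  have "cart_basis \<subseteq> vec.span ?P"
  proof
    fix x assume "x \<in> (cart_basis :: ('a^('p\<times>'r)) set)"
    then obtain pr where x: "x = axis pr 1" by (auto simp: cart_basis_def)
    obtain p r where pr: "pr = (p, r)" by (cases pr)
    have "x = vtens (axis p 1) (axis r 1)" by (simp add: x pr vtens_def axis_def vec_eq_iff)
    then show "x \<in> vec.span ?P" using st2 by simp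
  qed
  then have "vec.span cart_basis \<subseteq> vec.span ?P" by (rule vec.span_minimal) (rule vec.subspace_span)
  then show ?thesis by (simp add: top.extremum_unique)
qed

lemma isL_modl:
  fixes X :: "('a::field,'p::finite) sqmat"
  assumes L: "isL n d q u i G X e a" and "d \<ge> 2" "d dvd n" "n \<noteq> 0" "q \<noteq> 0" and h0: "h \<noteq> 0" and Xh: "X *v h = 0"
  shows "modl n d q G X e a i h"
proof -
  have dr: "drep n d q G X e a" using L unfolding isL_def by (elim conjE) assumption
  have sim: "dsimple G X e a" using L unfolding isL_def by (elim conjE) assumption
  have "\<exists>Y. Y \<noteq> 0 \<and> e i *v Y = Y \<and> {v. X *v v = 0} = vec.span {Y}"
    using L unfolding isL_def by (elim conjE) assumption
  then obtain Y where Y: "Y \<noteq> 0" "e i *v Y = Y" "{v. X *v v = 0} = vec.span {Y}" by blast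
  have "h \<in> vec.span {Y}" using Y(3) Xh by blast
  then obtain k0 where k0: "h = k0 *s Y" by (auto simp: vec.span_singleton)
  have k0nz: "k0 \<noteq> 0" using k0 h0 by auto
  have eh: "e i *v h = h" using k0 Y(2) by (simp add: vector_scalar_commute)
  have kerh: "\<exists>k. v = k *s h" if "X *v v = 0" for v
  proof -
    have "v \<in> vec.span {Y}" using Y(3) that by blast
    then obtain k where "v = k *s Y" by (auto simp: vec.span_singleton)
    then have "v = (k * inverse k0) *s h" using k0nz by (simp add: k0 vec.scale_scale)
    then show ?thesis by blast
  qed
  show ?thesis
    by (rule modl.intro) (use dr sim assms eh kerh in auto)
qed

theorem mainTheorem11:
  fixes n d :: nat and q :: "'a::alg_closed_field" and u i v j :: int
    and G1 X1 :: "('a,'p::finite) sqmat" and e1 a1 :: "int \<Rightarrow> ('a,'p) sqmat"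
    and G2 X2 :: "('a,'r::finite) sqmat" and e2 a2 :: "int \<Rightarrow> ('a,'r) sqmat"
    and h :: "'a^'p" and h' :: "'a^'r"
  assumes "d \<ge> 2" and "d dvd n" and "of_nat n \<noteq> (0::'a)"
    and "q ^ d = 1" and "\<forall>m. 0 < m \<and> m < d \<longrightarrow> q ^ m \<noteq> 1"
    and L1: "isL n d q u i G1 X1 e1 a1"
    and L2: "isL n d q v j G2 X2 e2 a2"
    and "CARD('p) \<le> CARD('r)"
    and "h \<noteq> 0" and "X1 *v h = 0"
    and "h' \<noteq> 0" and "X2 *v h' = 0"
  shows
    "let \<alpha> = CARD('p); \<beta> = CARD('r);
         z = (\<lambda>s t. vtens (gam e1 a1 i s *v h) (gam e2 a2 j t *v h'));
         B = (\<lambda>(s, t). z s t) ` ({..<\<alpha>} \<times> {..<\<beta>});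
         Hom = (\<lambda>\<theta>. vec.span {z s t | s t. s < \<alpha> \<and> t < \<beta> \<and> s + t = \<theta>});
         K = {x. tensX X1 G1 X2 G2 *v x = 0}
     in inj_on (\<lambda>(s, t). z s t) ({..<\<alpha>} \<times> {..<\<beta>}) \<and>
        vec.independent B \<and> vec.span B = UNIV \<and>
        vec.dim K = \<alpha> \<and>
        (\<exists>x :: nat \<Rightarrow> 'a^('p \<times> 'r).
           (\<forall>\<theta><\<alpha>. x \<theta> \<noteq> 0 \<and> x \<theta> \<in> Hom \<theta> \<and> K \<inter> Hom \<theta> = vec.span {x \<theta>}) \<and>
           vec.span (x ` {..<\<alpha>}) = K)"
proof -
  have n0: "n \<noteq> 0" using assms(3) by (cases n) auto
  have q0: "q \<noteq> 0" using assms(4) assms(1) by (cases "q = 0") (auto simp: power_0_left)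
  interpret M1: modl n d q G1 X1 e1 a1 i h
    by (rule isL_modl[OF L1 assms(1,2) n0 q0 assms(9,10)])
  interpret M2: modl n d q G2 X2 e2 a2 j h'
    by (rule isL_modl[OF L2 assms(1,2) n0 q0 assms(11,12)])
  define Z where "Z = (\<lambda>s t. vtens (gam e1 a1 i s *v h) (gam e2 a2 j t *v h'))"
  have Zhs: "Z s t = vtens (M1.hs s) (M2.hs t)" for s t by (simp add: Z_def M1.hs_def M2.hs_def)
  define T where "T = tensX X1 G1 X2 G2"
  define I where "I = {..<CARD('p)} \<times> {..<CARD('r)}"
  define zz where "zz = (\<lambda>(s, t). Z s t)"
  define Bs where "Bs = zz ` I"
  have finI: "finite I" by (simp add: I_def)
  have finB: "finite Bs" by (simp add: Bs_def finI)
  have BsE: "Bs = {vtens x y | x y. x \<in> M1.hs ` {..<CARD('p)} \<and> y \<in> M2.hs ` {..<CARD('r)}}"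
  proof
    show "Bs \<subseteq> {vtens x y | x y. x \<in> M1.hs ` {..<CARD('p)} \<and> y \<in> M2.hs ` {..<CARD('r)}}"
      by (auto simp: Bs_def zz_def I_def Zhs)
    show "{vtens x y | x y. x \<in> M1.hs ` {..<CARD('p)} \<and> y \<in> M2.hs ` {..<CARD('r)}} \<subseteq> Bs"
    proof
      fix w assume "w \<in> {vtens x y | x y. x \<in> M1.hs ` {..<CARD('p)} \<and> y \<in> M2.hs ` {..<CARD('r)}}"
      then obtain s t where st: "s < CARD('p)" "t < CARD('r)" "w = vtens (M1.hs s) (M2.hs t)" by auto
      then have "w = zz (s, t)" by (simp add: zz_def Zhs)
      moreover have "(s, t) \<in> I" using st by (simp add: I_def)
      ultimately show "w \<in> Bs" by (simp add: Bs_def)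
    qed
  qed
  have spB: "vec.span Bs = UNIV"
    unfolding BsE by (rule vtens_span) (use M1.modl_final M2.modl_final in auto)
  have cardI: "card I = CARD('p) * CARD('r)" by (simp add: I_def card_cartesian_product)
  have dimU: "vec.dim (UNIV :: ('a^('p\<times>'r)) set) = CARD('p) * CARD('r)"
  proof -
    have "vec.dim (UNIV :: ('a^('p\<times>'r)) set) = CARD('p\<times>'r)" by (rule vec_dim_card)
    also have "CARD('p\<times>'r) = CARD('p) * CARD('r)"
      using card_cartesian_product[of "UNIV :: 'p set" "UNIV :: 'r set"] by simp
    finally show ?thesis .
  qed
  have "CARD('p) * CARD('r) \<le> card Bs"
    using vec.span_card_ge_dim[of Bs UNIV] spB finB dimU by simp
  moreover have "card Bs \<le> card I" by (simp add: Bs_def card_image_le finI)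
  ultimately have cardB: "card Bs = card I" using cardI by simp
  have inj: "inj_on zz I" by (rule eq_card_imp_inj_on[OF finI]) (simp add: cardB flip: Bs_def)
  have indep: "vec.independent Bs"
    by (rule vec.card_le_dim_spanning[of Bs UNIV]) (use spB finB dimU cardB cardI in auto)
  have sumB: "(\<Sum>v\<in>Bs. f v *s v) = (\<Sum>s<CARD('p). \<Sum>t<CARD('r). f (Z s t) *s Z s t)" for f
  proof -
    have "(\<Sum>v\<in>Bs. f v *s v) = (\<Sum>k\<in>I. f (zz k) *s zz k)" by (simp add: Bs_def sum.reindex[OF inj])
    also have "\<dots> = (\<Sum>s<CARD('p). \<Sum>t<CARD('r). f (Z s t) *s Z s t)"
      by (simp add: I_def zz_def sum.cartesian_product case_prod_beta)
    finally show ?thesis .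
  qed
  have ind: "c s t = 0" if h: "(\<Sum>s<CARD('p). \<Sum>t<CARD('r). c s t *s Z s t) = 0" "s < CARD('p)" "t < CARD('r)" for c s t
  proof -
    define f where "f v = c (fst (inv_into I zz v)) (snd (inv_into I zz v))" for v
    have fZ: "f (Z s t) = c s t" if "s < CARD('p)" "t < CARD('r)" for s t
    proof -
      have "(s, t) \<in> I" using that by (simp add: I_def)
      then have "inv_into I zz (zz (s, t)) = (s, t)" by (rule inv_into_f_f[OF inj])
      then show ?thesis by (simp add: f_def zz_def)
    qed
    have "(\<Sum>v\<in>Bs. f v *s v) = (\<Sum>s<CARD('p). \<Sum>t<CARD('r). c s t *s Z s t)"
      unfolding sumB by (intro sum.cong refl) (simp add: fZ)
    then have "(\<Sum>v\<in>Bs. f v *s v) = 0" using h by simp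
    then have "\<forall>v\<in>Bs. f v = 0" using indep by (simp add: vec.independent_explicit)
    moreover have "Z s t \<in> Bs" using h by (auto simp: Bs_def zz_def I_def)
    ultimately show ?thesis using fZ h by auto
  qed
  have sp: "\<exists>c. w = (\<Sum>s<CARD('p). \<Sum>t<CARD('r). c s t *s Z s t)" for w
  proof -
    have "w \<in> vec.span Bs" using spB by simp
    then obtain f where wf: "w = (\<Sum>v\<in>Bs. f v *s v)" by (auto simp: vec.span_finite[OF finB])
    show ?thesis by (rule exI[where x="\<lambda>s t. f (Z s t)"]) (simp add: wf sumB)
  qed
  have X1hs: "X1 *v M1.hs s = (if s = 0 then 0 else M1.lam (s-1) *s M1.hs (s-1))" for s
    by (cases s) (simp_all add: M1.hs0 M1.Xh M1.lam)
  have X2hs: "X2 *v M2.hs t = (if t = 0 then 0 else M2.lam (t-1) *s M2.hs (t-1))" for t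
    by (cases t) (simp_all add: M2.hs0 M2.Xh M2.lam)
  define A where "A s t = M1.lam (s-1) * (M2.cG * q ^ t)" for s t
  define B where "B t = M2.lam (t-1)" for t
  have Tz: "T *v Z s t = (if s=0 then 0 else A s t *s Z (s-1) t) + (if t=0 then 0 else B t *s Z s (t-1))" for s t
    by (simp add: T_def Zhs tensX_vtens X1hs X2hs M2.G_hs A_def B_def vtens_scale_l vtens_scale_r
        vtens_zero_l vtens_zero_r vec.scale_scale mult_ac)
  interpret K: tk Z T A B "CARD('p)" "CARD('r)"
  proof
    show "CARD('p) \<le> CARD('r)" by fact
    show "0 < CARD('p)" by simp
    show "\<And>c s t. (\<Sum>s<CARD('p). \<Sum>t<CARD('r). c s t *s Z s t) = 0 \<Longrightarrow> s < CARD('p) \<Longrightarrow> t < CARD('r) \<Longrightarrow> c s t = 0"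
      by (rule ind)
    show "\<And>w. \<exists>c. w = (\<Sum>s<CARD('p). \<Sum>t<CARD('r). c s t *s Z s t)" by (rule sp)
    show "\<And>s t. s < CARD('p) \<Longrightarrow> t < CARD('r) \<Longrightarrow> T *v Z s t = (if s=0 then 0 else A s t *s Z (s-1) t) + (if t=0 then 0 else B t *s Z s (t-1))"
      by (rule Tz)
    show "\<And>s t. 0 < s \<Longrightarrow> s < CARD('p) \<Longrightarrow> t < CARD('r) \<Longrightarrow> A s t \<noteq> 0"
      using M1.lam_nz M2.cG0 q0 by (simp add: A_def)
    show "\<And>t. 0 < t \<Longrightarrow> t < CARD('r) \<Longrightarrow> B t \<noteq> 0"
      using M2.lam_nz by (simp add: B_def)
  qed
  have R: "inj_on (\<lambda>(s, t). Z s t) ({..<CARD('p)} \<times> {..<CARD('r)}) \<and>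
        vec.independent ((\<lambda>(s, t). Z s t) ` ({..<CARD('p)} \<times> {..<CARD('r)})) \<and>
        vec.span ((\<lambda>(s, t). Z s t) ` ({..<CARD('p)} \<times> {..<CARD('r)})) = UNIV \<and>
        vec.dim {x. tensX X1 G1 X2 G2 *v x = 0} = CARD('p) \<and>
        (\<exists>x :: nat \<Rightarrow> 'a^('p \<times> 'r).
           (\<forall>\<theta><CARD('p). x \<theta> \<noteq> 0 \<and> x \<theta> \<in> vec.span {Z s t | s t. s < CARD('p) \<and> t < CARD('r) \<and> s + t = \<theta>}
             \<and> {x. tensX X1 G1 X2 G2 *v x = 0} \<inter> vec.span {Z s t | s t. s < CARD('p) \<and> t < CARD('r) \<and> s + t = \<theta>} = vec.span {x \<theta>}) \<and>
           vec.span (x ` {..<CARD('p)}) = {x. tensX X1 G1 X2 G2 *v x = 0})"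
    using inj indep spB K.main unfolding zz_def I_def Bs_def K.hom_def T_def by blast
  show ?thesis unfolding Let_def using R[unfolded Z_def] .
qed

end
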